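(* Let $D_1\subset\mathbb{C}$ be a domain biholomorphic to $\mathbb{C}_*:=\mathbb{C}\setminus\{0\}$. Then $h_{D_1\times D_2}\equiv\kappa_{D_1\times D_2}$ for every domain $D_2\subset\mathbb{C}$.
   Context: $E$ denotes the open unit disc in $\mathbb{C}$, and $\mathcal{O}(E,D)$ the set of holomorphic maps $E\to D$. For a domain $D\subset\mathbb{C}^n$, $z\in D$, $X\in\mathbb{C}^n$, the Kobayashi–Royden pseudometric is $\kappa_D(z;X):=\inf\{|\alpha| : \exists f\in\mathcal{O}(E,D),\ f(0)=z,\ \alpha f'(0)=X\}$ and the Hahn pseudometric is $h_D(z;X):=\inf\{|\alpha| : \exists f\in\mathcal{O}(E,D) \text{ injective},\ f(0)=z,\ \alpha f'(0)=X\}$. The notation $h_D\equiv\kappa_D$ means equality for all $(z,X)\in D\times\mathbb{C}^n$. *)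

theory Defs
  imports "HOL-Complex_Analysis.Complex_Analysis"
begin

definition hol_disc :: "(complex \<Rightarrow> complex \<times> complex) \<Rightarrow> (complex \<times> complex) set \<Rightarrow> bool" where
  "hol_disc f D \<longleftrightarrow> (\<lambda>t. fst (f t)) holomorphic_on ball 0 1 \<and>
                      (\<lambda>t. snd (f t)) holomorphic_on ball 0 1 \<and> f ` ball 0 1 \<subseteq> D"

definition disc_deriv0 :: "(complex \<Rightarrow> complex \<times> complex) \<Rightarrow> complex \<times> complex" where
  "disc_deriv0 f = (deriv (\<lambda>t. fst (f t)) 0, deriv (\<lambda>t. snd (f t)) 0)"

definition kobayashi :: "(complex \<times> complex) set \<Rightarrow> complex \<times> complex \<Rightarrow> complex \<times> complex \<Rightarrow> real" where
  "kobayashi D z X = Inf {norm \<alpha> | \<alpha>::complex. \<exists>f. hol_disc f D \<and> f 0 = z \<and>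
       (\<alpha> * fst (disc_deriv0 f), \<alpha> * snd (disc_deriv0 f)) = X}"

definition hahn :: "(complex \<times> complex) set \<Rightarrow> complex \<times> complex \<Rightarrow> complex \<times> complex \<Rightarrow> real" where
  "hahn D z X = Inf {norm \<alpha> | \<alpha>::complex. \<exists>f. hol_disc f D \<and> inj_on f (ball 0 1) \<and> f 0 = z \<and>
       (\<alpha> * fst (disc_deriv0 f), \<alpha> * snd (disc_deriv0 f)) = X}"

end

theory Submission
  imports Defs
begin


lemma lift:
  fixes \<psi> \<phi> W G :: "complex \<Rightarrow> complex"
  assumes h\<psi>: "\<psi> holomorphic_on - {0}" and inv: "\<forall>w\<in>- {0}. \<phi> (\<psi> w) = w"
    and into: "\<forall>w\<in>- {0}. \<psi> w \<in> D1"
    and hW: "W holomorphic_on ball 0 1" and W0: "\<forall>t\<in>ball 0 1. W t \<noteq> 0"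
    and hG: "G holomorphic_on ball 0 1" and G1: "G ` ball 0 1 \<subseteq> D2"
    and inj: "\<forall>s\<in>ball 0 1. \<forall>t\<in>ball 0 1. W s = W t \<and> G s = G t \<longrightarrow> s = t"
  shows "hol_disc (\<lambda>t. (\<psi> (W t), G t)) (D1 \<times> D2) \<and> inj_on (\<lambda>t. (\<psi> (W t), G t)) (ball 0 1)
     \<and> disc_deriv0 (\<lambda>t. (\<psi> (W t), G t)) = (deriv \<psi> (W 0) * deriv W 0, deriv G 0)"
proof (intro conjI)
  have img: "W ` ball 0 1 \<subseteq> - {0}" using W0 by auto
  have hc: "(\<psi> \<circ> W) holomorphic_on ball 0 1"
    by (rule holomorphic_on_compose_gen[OF hW h\<psi> img])
  show "hol_disc (\<lambda>t. (\<psi> (W t), G t)) (D1 \<times> D2)"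
    unfolding hol_disc_def using hc hG G1 into W0 by (auto simp: o_def)
  show "inj_on (\<lambda>t. (\<psi> (W t), G t)) (ball 0 1)"
  proof (rule inj_onI)
    fix s t assume s: "s \<in> ball 0 1" and t: "t \<in> ball 0 1" and e: "(\<psi> (W s), G s) = (\<psi> (W t), G t)"
    then have "\<phi> (\<psi> (W s)) = \<phi> (\<psi> (W t))" by simp
    then have "W s = W t" using inv W0 s t by auto
    then show "s = t" using inj s t e by auto
  qed
  have 0: "(0::complex) \<in> ball 0 1" by simp
  have dW: "W field_differentiable at 0"
    using hW 0 holomorphic_on_imp_differentiable_at by blast
  have W00: "W 0 \<in> - {0}" using W0 by auto
  have d\<psi>: "\<psi> field_differentiable at (W 0)"
    using h\<psi> W00 holomorphic_on_imp_differentiable_at open_Compl by blast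
  have "deriv (\<lambda>t. \<psi> (W t)) 0 = deriv \<psi> (W 0) * deriv W 0"
    using deriv_chain[OF dW d\<psi>] by (simp add: o_def)
  then show "disc_deriv0 (\<lambda>t. (\<psi> (W t), G t)) = (deriv \<psi> (W 0) * deriv W 0, deriv G 0)"
    unfolding disc_deriv0_def by simp
qed



lemma consA:
  fixes g :: "complex \<Rightarrow> complex"
  assumes hg: "g holomorphic_on ball 0 1" and g'0: "deriv g 0 \<noteq> 0" and w0: "w0 \<noteq> 0"
  shows "\<exists>W. W holomorphic_on ball 0 1 \<and> (\<forall>t\<in>ball 0 1. W t \<noteq> 0) \<and> W 0 = w0 \<and> deriv W 0 = v
     \<and> (\<forall>s\<in>ball 0 1. \<forall>t\<in>ball 0 1. W s = W t \<and> g s = g t \<longrightarrow> s = t)"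
proof -
  define K where "K = (v / w0 - 1/2) / deriv g 0"
  define W where "W = (\<lambda>t. w0 * exp (K * (g t - g 0)) * (1 + t/2))"
  have "W holomorphic_on ball 0 1" unfolding W_def by (intro holomorphic_intros hg) simp
  moreover have "\<forall>t\<in>ball 0 1. W t \<noteq> 0"
  proof
    fix t :: complex assume "t \<in> ball 0 1"
    then have "norm t < 1" by simp
    then have "1 + t/2 \<noteq> 0"
      by (metis add.commute add_eq_0_iff2 minus_divide_left norm_divide norm_minus_cancel
          norm_numeral numeral_One one_less_numeral_iff semiring_norm(76) divide_less_eq_1_pos
          zero_less_numeral less_irrefl order.strict_trans norm_one)
    then show "W t \<noteq> 0" unfolding W_def using w0 by simp
  qed
  moreover have "W 0 = w0" unfolding W_def by simp
  moreover have "deriv W 0 = v"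
  proof -
    have dg: "(g has_field_derivative deriv g 0) (at 0)"
      using holomorphic_derivI[OF hg] by simp
    have "(W has_field_derivative (w0 * (exp (K * (g 0 - g 0)) * (K * deriv g 0)) * (1 + 0/2)
            + w0 * exp (K * (g 0 - g 0)) * (1/2))) (at 0)"
      unfolding W_def by (rule derivative_eq_intros dg refl | simp)+
    moreover have "w0 * (exp (K * (g 0 - g 0)) * (K * deriv g 0)) * (1 + 0/2)
            + w0 * exp (K * (g 0 - g 0)) * (1/2) = v"
      unfolding K_def using g'0 w0 by (simp add: field_simps)
    ultimately show ?thesis by (simp add: DERIV_imp_deriv)
  qed
  moreover have "\<forall>s\<in>ball 0 1. \<forall>t\<in>ball 0 1. W s = W t \<and> g s = g t \<longrightarrow> s = t"
    unfolding W_def using w0 by auto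
  ultimately show ?thesis by blast
qed

lemma consB:
  fixes A w0 z2 :: complex
  assumes A: "A \<noteq> 0" and w0: "w0 \<noteq> 0" and r: "r > 0" and D2: "ball z2 r \<subseteq> D2"
  shows "\<exists>W G. W holomorphic_on ball 0 1 \<and> (\<forall>t\<in>ball 0 1. W t \<noteq> 0) \<and> W 0 = w0 \<and> deriv W 0 = w0 * A
     \<and> G holomorphic_on ball 0 1 \<and> G ` ball 0 1 \<subseteq> D2 \<and> G 0 = z2 \<and> deriv G 0 = 0
     \<and> (\<forall>s\<in>ball 0 1. \<forall>t\<in>ball 0 1. W s = W t \<and> G s = G t \<longrightarrow> s = t)"
proof -
  define M where "M = norm A + exp (norm A) + 1"
  have M: "M > 0" unfolding M_def by (smt (verit) norm_ge_zero exp_gt_zero)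
  define c where "c = r / (2 * M)"
  have c: "c > 0" unfolding c_def using r M by simp
  define \<rho> where "\<rho> = complex_of_real c"
  have n\<rho>: "norm \<rho> = r / (2 * M)" proof -
    have "norm \<rho> = c" unfolding \<rho>_def using c by simp
    then show ?thesis by (simp add: c_def)
  qed
  define W where "W = (\<lambda>t::complex. w0 * exp (A * t))"
  define G where "G = (\<lambda>t::complex. z2 + \<rho> * (A * t - exp (A * t) + 1))"
  have \<rho>0: "\<rho> \<noteq> 0" unfolding \<rho>_def using c by simp
  have "W holomorphic_on ball 0 1" unfolding W_def by (intro holomorphic_intros)
  moreover have "\<forall>t\<in>ball 0 1. W t \<noteq> 0" unfolding W_def using w0 by simp
  moreover have "W 0 = w0" unfolding W_def by simp
  moreover have "deriv W 0 = w0 * A"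
  proof -
    have "(W has_field_derivative (w0 * (exp (A * 0) * (A * 1)))) (at 0)"
      unfolding W_def by (rule derivative_eq_intros refl | simp)+
    then show ?thesis by (simp add: DERIV_imp_deriv)
  qed
  moreover have "G holomorphic_on ball 0 1" unfolding G_def by (intro holomorphic_intros)
  moreover have "G ` ball 0 1 \<subseteq> D2"
  proof
    fix y assume "y \<in> G ` ball 0 1"
    then obtain t :: complex where t: "norm t < 1" and y: "y = G t" by auto
    have "norm (A * t - exp (A * t) + 1) \<le> norm (A * t) + norm (exp (A * t)) + 1"
      using norm_triangle_ineq[of "A*t - exp(A*t)" 1] norm_triangle_ineq4[of "A*t" "exp(A*t)"] by simp
    also have "\<dots> \<le> norm A + exp (norm A) + 1"
    proof -
      have a: "norm (A * t) \<le> norm A"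
        using t by (simp add: norm_mult mult_left_le)
      have "norm (exp (A * t)) \<le> exp (norm (A * t))" by (rule norm_exp)
      also have "\<dots> \<le> exp (norm A)" using a by simp
      finally have e: "norm (exp (A * t)) \<le> exp (norm A)" .
      show ?thesis using a e by linarith
    qed
    finally have n: "norm (A * t - exp (A * t) + 1) \<le> M" unfolding M_def .
    have "dist z2 y = norm (\<rho> * (A * t - exp (A * t) + 1))"
      unfolding y G_def dist_norm by simp
    also have "\<dots> = (r / (2 * M)) * norm (A * t - exp (A * t) + 1)"
      unfolding norm_mult n\<rho> ..
    also have "\<dots> \<le> (r / (2 * M)) * M"
      using n r M by (intro mult_left_mono) auto
    also have "\<dots> < r" using r M by simp
    finally show "y \<in> D2" using D2 by auto
  qed
  moreover have "G 0 = z2" unfolding G_def by simp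
  moreover have "deriv G 0 = 0"
  proof -
    have "(G has_field_derivative (\<rho> * (A * 1 - exp (A * 0) * (A * 1) + 0))) (at 0)"
      unfolding G_def by (rule derivative_eq_intros refl | simp)+
    then show ?thesis by (simp add: DERIV_imp_deriv)
  qed
  moreover have "\<forall>s\<in>ball 0 1. \<forall>t\<in>ball 0 1. W s = W t \<and> G s = G t \<longrightarrow> s = t"
  proof (intro ballI impI)
    fix s t :: complex assume "W s = W t \<and> G s = G t"
    then have e1: "exp (A * s) = exp (A * t)" and e2: "G s = G t"
      unfolding W_def using w0 by auto
    from e2 have "\<rho> * (A * s - exp (A * s) + 1) = \<rho> * (A * t - exp (A * t) + 1)"
      unfolding G_def by simp
    then have "A * s - exp (A * s) + 1 = A * t - exp (A * t) + 1" using \<rho>0 by simp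
    then have "A * s = A * t" using e1 by simp
    then show "s = t" using A by simp
  qed
  ultimately show ?thesis by blast
qed


lemma memH:
  fixes \<psi> \<phi> W G :: "complex \<Rightarrow> complex"
  assumes h\<psi>: "\<psi> holomorphic_on - {0}" and inv: "\<forall>w\<in>- {0}. \<phi> (\<psi> w) = w"
    and into: "\<forall>w\<in>- {0}. \<psi> w \<in> D1"
    and hW: "W holomorphic_on ball 0 1" and W0: "\<forall>t\<in>ball 0 1. W t \<noteq> 0"
    and hG: "G holomorphic_on ball 0 1" and G1: "G ` ball 0 1 \<subseteq> DD"
    and inj: "\<forall>s\<in>ball 0 1. \<forall>t\<in>ball 0 1. W s = W t \<and> G s = G t \<longrightarrow> s = t"
    and "\<psi> (W 0) = za" "G 0 = zb"
    and "\<alpha> * (deriv \<psi> (W 0) * deriv W 0) = Xa" "\<alpha> * deriv G 0 = Xb"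
  shows "norm \<alpha> \<in> {norm \<alpha> | \<alpha>::complex. \<exists>f. hol_disc f (D1 \<times> DD) \<and> inj_on f (ball 0 1) \<and> f 0 = (za, zb) \<and>
       (\<alpha> * fst (disc_deriv0 f), \<alpha> * snd (disc_deriv0 f)) = (Xa, Xb)}"
proof -
  note L = lift[OF h\<psi> inv into hW W0 hG G1 inj]
  show ?thesis
    by (rule CollectI, rule exI[of _ \<alpha>], rule conjI[OF refl], rule exI[of _ "\<lambda>t. (\<psi> (W t), G t)"])
      (use L assms(9-12) in auto)
qed

theorem proposition3:
  fixes D1 D2 :: "complex set"
  assumes "open D1" "connected D1" "D1 \<noteq> {}"
    and "\<exists>\<phi> \<psi>. \<phi> holomorphic_on D1 \<and> \<phi> ` D1 = - {0} \<and> \<psi> holomorphic_on (- {0}) \<and>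
              (\<forall>z\<in>D1. \<psi> (\<phi> z) = z) \<and> (\<forall>w\<in>- {0}. \<phi> (\<psi> w) = w)"
    and "open D2" "connected D2" "D2 \<noteq> {}"
  shows "\<forall>z \<in> D1 \<times> D2. \<forall>X. hahn (D1 \<times> D2) z X = kobayashi (D1 \<times> D2) z X"
proof (intro ballI allI)
  obtain \<phi> \<psi> where h\<phi>: "\<phi> holomorphic_on D1" and im: "\<phi> ` D1 = - {0}" and h\<psi>: "\<psi> holomorphic_on (- {0})"
    and inv1: "\<forall>z\<in>D1. \<psi> (\<phi> z) = z" and inv: "\<forall>w\<in>- {0}. \<phi> (\<psi> w) = w"
    using assms(4) by blast
  have into: "\<forall>w\<in>- {0}. \<psi> w \<in> D1"
  proof
    fix w :: complex assume "w \<in> - {0}"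
    then obtain z where "z \<in> D1" "w = \<phi> z" using im by blast
    then show "\<psi> w \<in> D1" using inv1 by simp
  qed
  have inj\<psi>: "inj_on \<psi> (- {0})"
    by (rule inj_onI) (metis inv)
  fix z X :: "complex \<times> complex" assume zD: "z \<in> D1 \<times> D2"
  obtain z1 z2 where z: "z = (z1, z2)" by (cases z)
  obtain X1 X2 where X: "X = (X1, X2)" by (cases X)
  have z1: "z1 \<in> D1" and z2: "z2 \<in> D2" using zD z by auto
  define w0 where "w0 = \<phi> z1"
  have w0: "w0 \<noteq> 0" unfolding w0_def using im z1 by blast
  have \<psi>w0: "\<psi> w0 = z1" unfolding w0_def using inv1 z1 by simp
  define d where "d = deriv \<psi> w0"
  have d: "d \<noteq> 0" unfolding d_def
    by (rule holomorphic_injective_imp_regular[OF h\<psi> _ inj\<psi>]) (use w0 in auto)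
  obtain r where r: "r > 0" "ball z2 r \<subseteq> D2" using assms(5) z2 open_contains_ball by blast
  define HS where "HS = {norm \<alpha> | \<alpha>::complex. \<exists>f. hol_disc f (D1 \<times> D2) \<and> inj_on f (ball 0 1) \<and> f 0 = (z1, z2) \<and>
       (\<alpha> * fst (disc_deriv0 f), \<alpha> * snd (disc_deriv0 f)) = (X1, X2)}"
  define KS where "KS = {norm \<alpha> | \<alpha>::complex. \<exists>f. hol_disc f (D1 \<times> D2) \<and> f 0 = (z1, z2) \<and>
       (\<alpha> * fst (disc_deriv0 f), \<alpha> * snd (disc_deriv0 f)) = (X1, X2)}"
  have hz: "hahn (D1 \<times> D2) z X = Inf HS" unfolding hahn_def HS_def z X ..
  have kz: "kobayashi (D1 \<times> D2) z X = Inf KS" unfolding kobayashi_def KS_def z X ..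
  have sub: "HS \<subseteq> KS" unfolding HS_def KS_def by blast
  have bH: "bdd_below HS" unfolding HS_def by (rule bdd_belowI[of _ 0]) auto
  have bK: "bdd_below KS" unfolding KS_def by (rule bdd_belowI[of _ 0]) auto
  note mem = memH[OF h\<psi> inv into, where DD=D2 and za=z1 and zb=z2 and Xa=X1 and Xb=X2, folded HS_def]
  have caseA: "norm \<alpha> \<in> HS" if g: "g holomorphic_on ball 0 1" "g ` ball 0 1 \<subseteq> D2" "g 0 = z2"
      "\<alpha> * deriv g 0 = X2" and X2: "X2 \<noteq> 0" for g \<alpha>
  proof -
    have a0: "\<alpha> \<noteq> 0" and g0: "deriv g 0 \<noteq> 0" using g(4) X2 by auto
    obtain W where W: "W holomorphic_on ball 0 1" "\<forall>t\<in>ball 0 1. W t \<noteq> 0" "W 0 = w0"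
      "deriv W 0 = X1 / (\<alpha> * d)" "\<forall>s\<in>ball 0 1. \<forall>t\<in>ball 0 1. W s = W t \<and> g s = g t \<longrightarrow> s = t"
      using consA[OF g(1) g0 w0] by blast
    show ?thesis
      by (rule mem[OF W(1,2) g(1,2) W(5)]) (use W(3,4) \<psi>w0 g(3,4) a0 d in \<open>simp_all add: d_def\<close>)
  qed
  have caseB: "norm (if X1 = 0 then 0 else \<beta>) \<in> HS" if X2: "X2 = 0" and b: "\<beta> \<noteq> 0 \<or> X1 = 0" for \<beta> :: complex
  proof -
    define A where "A = (if X1 = 0 then 1 else X1 / (\<beta> * d * w0))"
    have A: "A \<noteq> 0" unfolding A_def using b d w0 by auto
    obtain W G where W: "W holomorphic_on ball 0 1" "\<forall>t\<in>ball 0 1. W t \<noteq> 0" "W 0 = w0" "deriv W 0 = w0 * A"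
      "G holomorphic_on ball 0 1" "G ` ball 0 1 \<subseteq> D2" "G 0 = z2" "deriv G 0 = 0"
      "\<forall>s\<in>ball 0 1. \<forall>t\<in>ball 0 1. W s = W t \<and> G s = G t \<longrightarrow> s = t"
      using consB[OF A w0 r] by blast
    show "norm (if X1 = 0 then 0 else \<beta>) \<in> HS"
      by (rule mem[OF W(1,2,5,6,9)]) (use W(3,4,7,8) \<psi>w0 X2 b d w0 in \<open>auto simp: d_def A_def\<close>)
  qed
  have key: "\<exists>a\<in>HS. a \<le> b" if "b \<in> KS" for b
  proof -
    from that obtain \<alpha> f where b: "b = norm \<alpha>" and f: "hol_disc f (D1 \<times> D2)" "f 0 = (z1, z2)"
      "(\<alpha> * fst (disc_deriv0 f), \<alpha> * snd (disc_deriv0 f)) = (X1, X2)"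
      unfolding KS_def by blast
    show ?thesis
    proof (cases "X2 = 0")
      case False
      have "norm \<alpha> \<in> HS"
        by (rule caseA[of "\<lambda>t. snd (f t)"]) (use f False in \<open>auto simp: hol_disc_def disc_deriv0_def\<close>)
      then show ?thesis using b by auto
    next
      case True
      show ?thesis
      proof (cases "X1 = 0")
        case True
        have "norm (0::complex) \<in> HS" using caseB[of 0] \<open>X2 = 0\<close> True by simp
        then have "0 \<in> HS" by simp
        moreover have "0 \<le> b" using b by simp
        ultimately show ?thesis by blast
      next
        case False
        then have "\<alpha> \<noteq> 0" using f(3) by auto
        then have "norm \<alpha> \<in> HS" using caseB[of \<alpha>] \<open>X2 = 0\<close> False by simp
        then show ?thesis using b by auto
      qed
    qed
  qed
  have HSne: "HS \<noteq> {}"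
  proof (cases "X2 = 0")
    case True
    have "norm (if X1 = 0 then 0 else (1::complex)) \<in> HS" using caseB[of 1] True by simp
    then show ?thesis by blast
  next
    case False
    define g where "g = (\<lambda>t::complex. z2 + complex_of_real (r/2) * t)"
    have gh: "g holomorphic_on ball 0 1" unfolding g_def by (intro holomorphic_intros)
    have gi: "g ` ball 0 1 \<subseteq> D2"
    proof
      fix y assume "y \<in> g ` ball 0 1"
      then obtain t :: complex where t: "norm t < 1" and y: "y = g t" by auto
      have "dist z2 y = (r/2) * norm t" unfolding y g_def dist_norm using r by (simp add: norm_mult)
      also have "\<dots> < r" using t r by (simp add: mult_less_cancel_left)
      finally show "y \<in> D2" using r by auto
    qed
    have gd: "deriv g 0 = complex_of_real (r/2)"
    proof -
      have "(g has_field_derivative (0 + complex_of_real (r/2) * 1)) (at 0)"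
        unfolding g_def by (rule derivative_eq_intros refl | simp)+
      then show ?thesis by (simp add: DERIV_imp_deriv)
    qed
    have "norm (X2 / complex_of_real (r/2)) \<in> HS"
    proof (rule caseA[OF gh gi])
      show "g 0 = z2" unfolding g_def by simp
      show "X2 / complex_of_real (r / 2) * deriv g 0 = X2" unfolding gd using r by simp
    qed (rule False)
    then show ?thesis by auto
  qed
  have "Inf KS \<le> Inf HS" by (rule cInf_superset_mono[OF HSne bK sub])
  moreover have "Inf HS \<le> Inf KS"
    by (rule cInf_mono[OF _ bH key]) (use HSne sub in auto)
  ultimately show "hahn (D1 \<times> D2) z X = kobayashi (D1 \<times> D2) z X" using hz kz by simp
qed

end
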